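(* Let $f_i$ and $f_j$ be IID cluster finite set densities on finite subsets of $\mathbb{R}^d$ with cardinality pmfs $p_i,p_j$ on $\{0,1,2,\ldots\}$ and single-object localisation densities $\rho_i,\rho_j$ on $\mathbb{R}^d$, and let $\omega\in[0,1]$. Let $z_\omega=\int_{\mathbb{R}^d}\rho_i^{(1-\omega)}(x)\rho_j^{\omega}(x)\,\mathrm{d}x$, $$N_\omega=\sum_{n'=0}^\infty p_i^{(1-\omega)}(n')\,p_j^{\omega}(n')\,z_\omega^{n'},\qquad p_\omega(n)=\frac{1}{N_\omega}p_i^{(1-\omega)}(n)\,p_j^{\omega}(n)\,z_\omega^{n}.$$ Then for any number of objects $n\ge1$ with $p_i(n)\neq0$ and $p_j(n)\neq0$, the fused cardinality satisfies $p_\omega(n)<\min\{p_i(n),p_j(n)\}$ if $z_\omega<\mathcal{I}_{\omega,n}$, where $$\mathcal{I}_{\omega,n}=\left(N_\omega\frac{\min\{p_i(n),p_j(n)\}}{p_i^{(1-\omega)}(n)\,p_j^{\omega}(n)}\right)^{1/n}.$$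
   Context: An IID cluster finite set density with cardinality pmf $p$ and (probability) density $\rho$ on $\mathbb{R}^d$ is $f(\{x_1,\ldots,x_n\})=p(n)\,n!\prod_{k=1}^n\rho(x_k)$. For two such densities, the cardinality distribution of the exponential mixture density $f_\omega\propto f_i^{1-\omega}f_j^{\omega}$ (normalised with respect to the set integral) is the pmf $p_\omega$ given in the claim. *)

theory Defs
  imports "HOL-Analysis.Analysis"
begin

text \<open>Real power of a nonnegative number with the convention that any number
  raised to the exponent 0 is 1 (so that f^0 = 1 also where f vanishes, as in the
  exponential mixture f_i^(1-w) f_j^w for w in {0,1}).\<close>
definition pw :: "real \<Rightarrow> real \<Rightarrow> real" where
  "pw x a = (if a = 0 then 1 else x powr a)"

definition card_pmf :: "(nat \<Rightarrow> real) \<Rightarrow> bool" where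
  "card_pmf p \<longleftrightarrow> (\<forall>n. 0 \<le> p n) \<and> p sums 1"

definition prob_density :: "(real^'d \<Rightarrow> real) \<Rightarrow> bool" where
  "prob_density \<rho> \<longleftrightarrow> (\<forall>x. 0 \<le> \<rho> x) \<and> integrable lborel \<rho> \<and> integral\<^sup>L lborel \<rho> = 1"

end

theory Submission
  imports Defs
begin

lemma pw_nonneg: "0 \<le> pw x a"
  by (simp add: pw_def)

lemma pw_pos: "0 < x \<Longrightarrow> 0 < pw x a"
  by (simp add: pw_def)

theorem corollary2:
  fixes p_i p_j :: "nat \<Rightarrow> real"
    and rho_i rho_j :: "real^'d \<Rightarrow> real"
    and \<omega> :: real and n :: nat
  assumes "card_pmf p_i" and "card_pmf p_j"
    and "prob_density rho_i" and "prob_density rho_j"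
    and "0 \<le> \<omega>" and "\<omega> \<le> 1"
    and "n \<ge> 1" and "p_i n \<noteq> 0" and "p_j n \<noteq> 0"
  defines "z \<equiv> (LINT x|lborel. pw (rho_i x) (1 - \<omega>) * pw (rho_j x) \<omega>)"
  defines "N \<equiv> (\<Sum>n'. pw (p_i n') (1 - \<omega>) * pw (p_j n') \<omega> * z ^ n')"
  defines "p_\<omega> \<equiv> (\<lambda>m. pw (p_i m) (1 - \<omega>) * pw (p_j m) \<omega> * z ^ m / N)"
  defines "I \<equiv> root n (N * min (p_i n) (p_j n) / (pw (p_i n) (1 - \<omega>) * pw (p_j n) \<omega>))"
  assumes "z < I"
  shows "p_\<omega> n < min (p_i n) (p_j n)"
proof -
  have pi: "p_i n > 0" using assms(1,8) unfolding card_pmf_def by (metis less_eq_real_def)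
  have pj: "p_j n > 0" using assms(2,9) unfolding card_pmf_def by (metis less_eq_real_def)
  define a where "a = pw (p_i n) (1 - \<omega>) * pw (p_j n) \<omega>"
  define m where "m = min (p_i n) (p_j n)"
  have a: "a > 0" unfolding a_def using pi pj by (simp add: pw_pos)
  have m: "m > 0" unfolding m_def using pi pj by simp
  have z0: "0 \<le> z" unfolding z_def
    by (simp add: pw_nonneg)
  have n0: "n > 0" using assms(7) by simp
  have zI: "z < root n (N * m / a)" using assms(14) unfolding I_def a_def m_def .
  have Ipos: "N * m / a > 0"
  proof (rule ccontr)
    assume "\<not> N * m / a > 0"
    hence "root n (N * m / a) \<le> 0" using n0 by (simp add: real_root_le_0_iff)
    thus False using zI z0 by simp
  qed
  hence N: "N > 0" using a m by (simp add: zero_less_divide_iff zero_less_mult_iff)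
  have "z ^ n < (root n (N * m / a)) ^ n"
    using zI z0 n0 by (simp add: power_strict_mono)
  also have "\<dots> = N * m / a" using n0 Ipos by simp
  finally have "z ^ n < N * m / a" .
  hence "a * z ^ n < N * m" using a by (simp add: field_simps)
  hence "a * z ^ n / N < m" using N by (simp add: field_simps)
  thus ?thesis unfolding p_\<omega>_def a_def m_def by simp
qed

end
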